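(* Average positivity of the entropy production of a control operation. In the control-step setting described in the context, for $\beta>0$ define for each outcome $r$ with $p(r)>0$ $$\Sigma^{\mathrm{ctrl}}(r) = -\ln p(r) + S_{\mathrm{vN}}(\rho^+(r)) - S_{\mathrm{vN}}(\rho^-) - \beta\,Q^{\mathrm{ctrl}}_S(r).$$ Then $\sum_{r:\,p(r)>0} p(r)\,\Sigma^{\mathrm{ctrl}}(r) \ge 0$. (Individual values $\Sigma^{\mathrm{ctrl}}(r)$ may be negative.)
   Context: Control-step setting: finite-dimensional Hilbert spaces $\mathcal H_S$ (system) and $\mathcal H_{U(1)},\dots,\mathcal H_{U(n)}$ (units), with a Hermitian system Hamiltonian $H_S$. The state just before the control operation is a density operator $\rho^-$ on $\mathcal H_S\otimes\mathcal H_{U(1)}\otimes\cdots\otimes\mathcal H_{U(n)}$ of the form $\rho^-_{SU(1)\cdots U(n-1)}\otimes\rho_{U(n)}$. The control operation consists of a unitary $V$ acting on $\mathcal H_S\otimes\mathcal H_{U(n)}$ followed by a measurement of $U(n)$ with positive operators $\{P(r)\}_r$ on $\mathcal H_{U(n)}$, $\sum_r P(r)^2=1$; $p(r)=\mathrm{tr}\{P(r)V\rho^-V^\dagger P(r)\}$, $\rho^+(r) = P(r)V\rho^-V^\dagger P(r)/p(r)$, and $Q^{\mathrm{ctrl}}_S(r)=\mathrm{tr}\{H_S(\rho^+(r)-V\rho^-V^\dagger)\}$. $S_{\mathrm{vN}}(\sigma)=-\mathrm{tr}\{\sigma\ln\sigma\}$. (The term $-\ln p(r)$ is the change of the trajectory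 term $-\ln p(\mathbf r_n)$, since $p(\mathbf r_n) = p(r_n|\mathbf r_{n-1})p(\mathbf r_{n-1})$.) *)

theory Defs
  imports "HOL-Analysis.Analysis"
begin

text \<open>Operators on a finite-dimensional Hilbert space with orthonormal basis indexed by a
  finite type 'i are complex matrices complex^'i^'i.  Tensor products of spaces correspond to
  product index types.\<close>

definition cadj :: "complex^'i^'j \<Rightarrow> complex^'j^'i" where
  "cadj A = (\<chi> i j. cnj (A $ j $ i))"

definition hermitian :: "complex^'i^'i \<Rightarrow> bool" where
  "hermitian A \<longleftrightarrow> cadj A = A"

definition unitary_op :: "complex^'i^'i \<Rightarrow> bool" where
  "unitary_op U \<longleftrightarrow> cadj U ** U = mat 1 \<and> U ** cadj U = mat 1"

definition positive_op :: "complex^'i^'i \<Rightarrow> bool" where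
  "positive_op A \<longleftrightarrow> (\<forall>x::complex^'i.
      Im (\<Sum>i\<in>UNIV. cnj (x $ i) * (A *v x) $ i) = 0 \<and>
      0 \<le> Re (\<Sum>i\<in>UNIV. cnj (x $ i) * (A *v x) $ i))"

definition density_op :: "complex^'i^'i \<Rightarrow> bool" where
  "density_op \<rho> \<longleftrightarrow> positive_op \<rho> \<and> trace \<rho> = 1"

definition diag_op :: "('i \<Rightarrow> real) \<Rightarrow> complex^'i^'i" where
  "diag_op d = (\<chi> i j. if i = j then complex_of_real (d i) else 0)"

definition mat_fun :: "(real \<Rightarrow> real) \<Rightarrow> complex^'i^'i \<Rightarrow> complex^'i^'i" where
  "mat_fun g A = (let (U, lam) = (SOME (U, lam). unitary_op U \<and> A = U ** diag_op lam ** cadj U)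
                  in U ** diag_op (g \<circ> lam) ** cadj U)"

text \<open>von Neumann entropy S(sigma) = - tr(sigma ln sigma); note ln 0 = 0 in Isabelle,
  which realises the convention 0 ln 0 = 0.\<close>
definition vN_entropy :: "complex^'i^'i \<Rightarrow> real" where
  "vN_entropy \<sigma> = - Re (trace (\<sigma> ** mat_fun ln \<sigma>))"

definition tensor_op :: "complex^'a::finite^'a \<Rightarrow> complex^'b::finite^'b \<Rightarrow> complex^('a\<times>'b)^('a\<times>'b)" where
  "tensor_op A B = (\<chi> i j. A $ fst i $ fst j * B $ snd i $ snd j)"

text \<open>Full space H_S (x) H_M (x) H_U, indexed by ('s \<times> 'm) \<times> 'u, where H_M stands for
  H_{U(1)} (x) ... (x) H_{U(n-1)} and H_U for H_{U(n)}.\<close>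

text \<open>V (x) 1_M for V acting on H_S (x) H_U.\<close>
definition lift_SU :: "complex^('s::finite\<times>'u::finite)^('s\<times>'u) \<Rightarrow> complex^(('s\<times>'m::finite)\<times>'u)^(('s\<times>'m)\<times>'u)" where
  "lift_SU V = (\<chi> i j. if snd (fst i) = snd (fst j)
       then V $ (fst (fst i), snd i) $ (fst (fst j), snd j) else 0)"

text \<open>H (x) 1_M (x) 1_U for H acting on H_S.\<close>
definition lift_S :: "complex^'s::finite^'s \<Rightarrow> complex^(('s\<times>'m::finite)\<times>'u::finite)^(('s\<times>'m)\<times>'u)" where
  "lift_S H = (\<chi> i j. if snd (fst i) = snd (fst j) \<and> snd i = snd j
       then H $ fst (fst i) $ fst (fst j) else 0)"

text \<open>1_S (x) 1_M (x) P for P acting on H_U.\<close>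
definition lift_U :: "complex^'u::finite^'u \<Rightarrow> complex^(('s::finite\<times>'m::finite)\<times>'u)^(('s\<times>'m)\<times>'u)" where
  "lift_U P = (\<chi> i j. if fst i = fst j then P $ snd i $ snd j else 0)"

end

theory Submission imports Defs begin
definition cinner :: "complex^'n \<Rightarrow> complex^'n \<Rightarrow> complex" where
  "cinner x y = (\<Sum>i\<in>UNIV. cnj (x$i) * y$i)"

lemma cinner_adj: "cinner x (A *v y) = cinner (cadj A *v x) y"
  unfolding cinner_def cadj_def matrix_vector_mult_def
  apply (simp add: sum_distrib_left sum_distrib_right mult_ac)
  apply (subst sum.swap) apply (simp add: mult_ac)
  done

lemma cinner_cnj: "cinner y x = cnj (cinner x y)"
  unfolding cinner_def by (simp add: mult.commute)

lemma cinner_add_right: "cinner x (y + z) = cinner x y + cinner x z"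
  unfolding cinner_def by (simp add: distrib_left sum.distrib)
lemma cinner_add_left: "cinner (x + y) z = cinner x z + cinner y z"
  unfolding cinner_def by (simp add: distrib_right sum.distrib)
lemma cinner_diff_right: "cinner x (y - z) = cinner x y - cinner x z"
  unfolding cinner_def by (simp add: right_diff_distrib sum_subtractf)
lemma cinner_diff_left: "cinner (x - y) z = cinner x z - cinner y z"
  unfolding cinner_def by (simp add: left_diff_distrib sum_subtractf)
lemma cinner_scale_right: "cinner x (c *s y) = c * cinner x y"
  unfolding cinner_def by (simp add: sum_distrib_left mult_ac)
lemma cinner_scale_left: "cinner (c *s x) y = cnj c * cinner x y"
  unfolding cinner_def by (simp add: sum_distrib_left mult_ac)
lemma cinner_zero_left[simp]: "cinner 0 y = 0"
  unfolding cinner_def by simp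
lemma cinner_zero_right[simp]: "cinner x 0 = 0"
  unfolding cinner_def by simp

lemma cinner_self: "cinner x x = of_real ((norm x)^2)"
proof -
  have "(norm x)^2 = (\<Sum>i\<in>UNIV. (cmod (x$i))^2)"
    unfolding norm_vec_def L2_set_def by (simp add: sum_nonneg)
  then show ?thesis unfolding cinner_def
    apply (simp add: of_real_sum)
    apply (rule sum.cong[OF refl])
    apply (simp only: of_real_power[symmetric] complex_norm_square)
    apply (simp add: mult.commute)
    done
qed

lemma mat_vec: "(mat c :: complex^'n^'n) *v z = c *s z"
proof -
  have "(\<Sum>j\<in>UNIV. (if i = j then c else 0) * z $ j) = c * z $ i" for i
  proof -
    have "(\<Sum>j\<in>UNIV. (if i = j then c else 0) * z $ j) = (\<Sum>j\<in>UNIV. if i = j then c * z $ j else 0)"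
      by (rule sum.cong) auto
    also have "\<dots> = c * z $ i" by simp
    finally show ?thesis .
  qed
  then show ?thesis by (simp add: vec_eq_iff matrix_vector_mult_def mat_def)
qed

lemma matrix_vector_scale: "(A::complex^'n^'m) *v (c *s x) = c *s (A *v x)"
  by (simp add: vec_eq_iff matrix_vector_mult_def sum_distrib_left mult_ac)

lemma matrix_vector_add: "(A::complex^'n^'m) *v (x + y) = A *v x + A *v y"
  by (simp add: matrix_vector_right_distrib)

lemma cont_cinner_right: "continuous_on S (\<lambda>x. cinner u x)"
  unfolding cinner_def by (intro continuous_intros continuous_on_component continuous_on_id)

lemma cont_quad: "continuous_on S (\<lambda>x. Re (cinner x ((A::complex^'n^'n) *v x)))"
  unfolding cinner_def matrix_vector_mult_def
  by (intro continuous_intros continuous_on_component continuous_on_id)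


lemma quad_real: "cadj A = A \<Longrightarrow> Im (cinner x ((A::complex^'n^'n) *v x)) = 0"
proof -
  assume h: "cadj A = A"
  have "cinner x (A *v x) = cinner (A *v x) x" using cinner_adj[of x A x] h by simp
  also have "\<dots> = cnj (cinner x (A *v x))" by (rule cinner_cnj)
  finally show ?thesis by (metis Reals_cnj_iff complex_is_Real_iff)
qed

lemma psd_zero:
  fixes B :: "complex^'n^'n"
  assumes herm: "cadj B = B"
    and addC: "\<And>x y. x \<in> C \<Longrightarrow> y \<in> C \<Longrightarrow> x + y \<in> C"
    and scC: "\<And>x c. x \<in> C \<Longrightarrow> c *s x \<in> C"
    and invC: "\<And>x. x \<in> C \<Longrightarrow> B *v x \<in> C"
    and neg: "\<And>z. z \<in> C \<Longrightarrow> Re (cinner z (B *v z)) \<le> 0"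
    and v: "v \<in> C" "Re (cinner v (B *v v)) = 0"
  shows "B *v v = 0"
proof -
  define w where "w = B *v v"
  have wC: "w \<in> C" using invC v unfolding w_def by simp
  define a where "a = (norm w)^2"
  define g where "g = Re (cinner w (B *v w))"
  have g0: "g \<le> 0" using neg wC unfolding g_def by simp
  have key: "2 * t * a + t^2 * g \<le> 0" for t :: real
  proof -
    have zC: "v + complex_of_real t *s w \<in> C" using addC scC v wC by simp
    have e1: "cinner v (B *v w) = cinner w w"
      using cinner_adj[of v B w] herm unfolding w_def by simp
    have e2: "cinner w (B *v v) = cinner w w" unfolding w_def ..
    have "cinner (v + complex_of_real t *s w) (B *v (v + complex_of_real t *s w))
        = cinner v (B *v v) + complex_of_real t * (cinner v (B *v w) + cinner w (B *v v))
          + (complex_of_real t)^2 * cinner w (B *v w)"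
      by (simp add: matrix_vector_add matrix_vector_scale cinner_add_left cinner_add_right
          cinner_scale_left cinner_scale_right algebra_simps power2_eq_square)
    also have "\<dots> = cinner v (B *v v) + complex_of_real (2 * t * a)
          + (complex_of_real t)^2 * cinner w (B *v w)"
      unfolding e1 e2 cinner_self a_def by simp
    finally have "Re (cinner (v + complex_of_real t *s w) (B *v (v + complex_of_real t *s w)))
          = 2 * t * a + t^2 * g"
      using v(2) unfolding g_def by (simp add: power2_eq_square)
    then show ?thesis using neg[OF zC] by simp
  qed
  have a0: "a \<ge> 0" unfolding a_def by simp
  have "a \<le> 0"
  proof (cases "g = 0")
    case True
    then show ?thesis using key[of 1] by simp
  next
    case False
    then have gn: "g < 0" using g0 by simp
    have "2 * (a / (-g)) * a + (a / (-g))^2 * g \<le> 0" using key by blast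
    then have "a^2 / (-g) \<le> 0" using gn by (simp add: field_simps power2_eq_square)
    then show ?thesis using gn by (smt (verit) a0 divide_pos_pos power2_less_0 zero_less_power2)
  qed
  then have "norm w = 0" using a0 unfolding a_def by simp
  then show ?thesis unfolding w_def by simp
qed
lemma norm_scale: "norm (c *s (x::complex^'n)) = cmod c * norm x"
proof -
  have "(norm (c *s x))^2 = (cmod c * norm x)^2"
  proof -
    have "complex_of_real ((norm (c *s x))^2) = complex_of_real ((cmod c * norm x)^2)"
      unfolding cinner_self[symmetric] cinner_scale_left cinner_scale_right
      by (simp add: cinner_self power_mult_distrib complex_norm_square[symmetric] mult_ac)
    then show ?thesis using of_real_eq_iff by blast
  qed
  then show ?thesis by (simp add: power2_eq_iff_nonneg)
qed

lemma eig_in_subspace: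
  fixes A :: "complex^'n^'n"
  assumes herm: "cadj A = A"
    and Cdef: "C = {x. \<forall>u\<in>F. cinner u x = 0}"
    and Feig: "\<forall>u\<in>F. \<exists>l. A *v u = l *s u"
    and x: "x \<in> C" "x \<noteq> 0"
  shows "\<exists>v\<in>C. norm v = 1 \<and> (\<exists>l::real. A *v v = complex_of_real l *s v)"
proof -
  have addC: "\<And>x y. x \<in> C \<Longrightarrow> y \<in> C \<Longrightarrow> x + y \<in> C"
    unfolding Cdef by (simp add: cinner_add_right)
  have scC: "\<And>x c. x \<in> C \<Longrightarrow> c *s x \<in> C"
    unfolding Cdef by (simp add: cinner_scale_right)
  have invC: "\<And>x. x \<in> C \<Longrightarrow> A *v x \<in> C"
  proof -
    fix x assume xC: "x \<in> C"
    { fix u assume u: "u \<in> F"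
      then obtain l where l: "A *v u = l *s u" using Feig by blast
      have "cinner u (A *v x) = cinner (A *v u) x" using cinner_adj[of u A x] herm by simp
      also have "\<dots> = cnj l * cinner u x" by (simp add: l cinner_scale_left)
      also have "\<dots> = 0" using xC u unfolding Cdef by simp
      finally have "cinner u (A *v x) = 0" . }
    then show "A *v x \<in> C" unfolding Cdef by simp
  qed
  define K where "K = C \<inter> sphere 0 1"
  have closedC: "closed C"
  proof -
    have "C = (\<Inter>u\<in>F. {x. cinner u x = 0})" unfolding Cdef by auto
    moreover have "closed {x. cinner u x = 0}" for u
      by (rule closed_Collect_eq) (auto intro: cont_cinner_right continuous_on_const)
    ultimately show ?thesis by auto
  qed
  have compK: "compact K" unfolding K_def
    by (simp add: closedC compact_Int_closed compact_sphere inf_commute closed_Int_compact)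
  define x1 where "x1 = complex_of_real (1 / norm x) *s x"
  have "x1 \<in> K" unfolding K_def x1_def using scC x by (simp add: norm_scale norm_divide)
  then have Kne: "K \<noteq> {}" by auto
  obtain v where vK: "v \<in> K" and vmax: "\<And>y. y \<in> K \<Longrightarrow> Re (cinner y (A *v y)) \<le> Re (cinner v (A *v v))"
    using continuous_attains_sup[OF compK Kne cont_quad[of K A]] by blast
  define lam where "lam = Re (cinner v (A *v v))"
  define B where "B = A - mat (complex_of_real lam)"
  have Bv: "B *v z = A *v z - complex_of_real lam *s z" for z
    unfolding B_def by (simp add: matrix_vector_mult_diff_rdistrib mat_vec)
  have hB: "cadj B = B"
    unfolding B_def using herm by (simp add: cadj_def vec_eq_iff mat_def)
  have qB: "cinner z (B *v z) = cinner z (A *v z) - complex_of_real lam * complex_of_real ((norm z)^2)" for z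
    unfolding Bv by (simp add: cinner_diff_right cinner_scale_right cinner_self)
  have vC: "v \<in> C" and nv: "norm v = 1" using vK unfolding K_def by auto
  have neg: "Re (cinner z (B *v z)) \<le> 0" if zC: "z \<in> C" for z
  proof (cases "z = 0")
    case True then show ?thesis by simp
  next
    case False
    define z1 where "z1 = complex_of_real (1 / norm z) *s z"
    have "z1 \<in> C" unfolding z1_def by (rule scC[OF zC])
    moreover have "norm z1 = 1"
    proof -
      have "norm z1 = \<bar>1 / norm z\<bar> * norm z" unfolding z1_def norm_scale norm_of_real ..
      also have "\<dots> = 1" using False by (metis abs_of_nonneg divide_self_if norm_eq_zero norm_ge_zero times_divide_eq_left mult_1 zero_le_divide_iff zero_le_one)
      finally show ?thesis .
    qed
    ultimately have "z1 \<in> K" unfolding K_def by simp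
    then have "Re (cinner z1 (A *v z1)) \<le> lam" using vmax unfolding lam_def by blast
    moreover have "cinner z1 (A *v z1) = complex_of_real ((1 / norm z)^2) * cinner z (A *v z)"
      unfolding z1_def by (simp add: matrix_vector_scale cinner_scale_left cinner_scale_right power2_eq_square)
    ultimately have "(1 / norm z)^2 * Re (cinner z (A *v z)) \<le> lam" by simp
    then have "Re (cinner z (A *v z)) \<le> lam * (norm z)^2" using False
      by (simp add: field_simps)
    then show ?thesis unfolding qB by simp
  qed
  have v0: "Re (cinner v (B *v v)) = 0" unfolding qB nv lam_def by simp
  have invB: "B *v x \<in> C" if xC: "x \<in> C" for x
  proof -
    have e: "A *v x + (- complex_of_real lam) *s x = B *v x" unfolding Bv by (simp add: vec_eq_iff)
    show ?thesis using addC[OF invC[OF xC] scC[OF xC, of "- complex_of_real lam"]] unfolding e .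
  qed
  have "B *v v = 0" by (rule psd_zero[OF hB addC scC invB neg vC v0])
  then have "A *v v = complex_of_real lam *s v" unfolding Bv by simp
  then show ?thesis using vC nv by blast
qed

lemma Re_cinner: "Re (cinner u x) = inner u x"
  unfolding cinner_def inner_vec_def Re_sum by (rule sum.cong) (auto simp: inner_complex_def)

lemma Im_cinner: "Im (cinner u x) = inner (\<i> *s u) x"
  unfolding cinner_def inner_vec_def Im_sum by (rule sum.cong) (auto simp: inner_complex_def)

lemma exists_orth:
  fixes F :: "(complex^'n) set"
  assumes fin: "finite F" and card: "card F < CARD('n)"
  shows "\<exists>x. x \<noteq> 0 \<and> (\<forall>u\<in>F. cinner u x = 0)"
proof -
  define S where "S = F \<union> (\<lambda>u. \<i> *s u) ` F"
  have "finite S" unfolding S_def using fin by simp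
  have "card S \<le> card F + card ((\<lambda>u. \<i> *s u) ` F)" unfolding S_def by (rule card_Un_le)
  also have "\<dots> \<le> card F + card F" using card_image_le[OF fin] by simp
  finally have "dim S < DIM(complex^'n)" using card dim_le_card'[OF \<open>finite S\<close>] by simp
  then obtain x where x0: "x \<noteq> 0" and orth: "\<And>y. y \<in> span S \<Longrightarrow> orthogonal x y"
    using orthogonal_to_subspace_exists by blast
  have "cinner u x = 0" if u: "u \<in> F" for u
  proof -
    have "u \<in> span S" "\<i> *s u \<in> span S" unfolding S_def using u by (auto intro: span_base)
    then have "inner u x = 0" "inner (\<i> *s u) x = 0"
      using orth unfolding orthogonal_def by (metis inner_commute)+
    then show ?thesis using Re_cinner[of u x] Im_cinner[of u x] by (simp add: complex_eq_iff)
  qed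
  then show ?thesis using x0 by blast
qed

definition ONE :: "complex^'n^'n \<Rightarrow> (complex^'n) set \<Rightarrow> bool" where
  "ONE A F \<longleftrightarrow> (\<forall>u\<in>F. cinner u u = 1 \<and> (\<exists>l::real. A *v u = complex_of_real l *s u)) \<and>
     (\<forall>u\<in>F. \<forall>w\<in>F. u \<noteq> w \<longrightarrow> cinner u w = 0)"

lemma ONE_exists:
  fixes A :: "complex^'n^'n"
  assumes herm: "cadj A = A"
  shows "k \<le> CARD('n) \<Longrightarrow> \<exists>F. finite F \<and> card F = k \<and> ONE A F"
proof (induction k)
  case 0
  then show ?case by (intro exI[of _ "{}"]) (simp add: ONE_def)
next
  case (Suc k)
  then obtain F where F: "finite F" "card F = k" "ONE A F" by auto
  have "card F < CARD('n)" using Suc F by simp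
  then obtain x where x: "x \<noteq> 0" "\<forall>u\<in>F. cinner u x = 0" using exists_orth[OF F(1)] by blast
  define C where "C = {x. \<forall>u\<in>F. cinner u x = 0}"
  have Feig: "\<forall>u\<in>F. \<exists>l. A *v u = l *s u" using F(3) unfolding ONE_def by blast
  obtain v where vC: "v \<in> C" and nv: "norm v = 1" and ev: "\<exists>l::real. A *v v = complex_of_real l *s v"
    using eig_in_subspace[OF herm C_def Feig, of x] x unfolding C_def by auto
  have vv: "cinner v v = 1" using nv by (simp add: cinner_self)
  have vF: "v \<notin> F" using vC vv unfolding C_def by auto
  have vw: "cinner v w = 0" if "w \<in> F" for w
  proof -
    have "cinner w v = 0" using vC that unfolding C_def by simp
    then show ?thesis using cinner_cnj[of v w] by simp
  qed
  have wv: "cinner w v = 0" if "w \<in> F" for w using vC that unfolding C_def by simp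
  have "ONE A (insert v F)"
    using F(3) vv ev vw wv unfolding ONE_def by blast
  then show ?case using F vF by (intro exI[of _ "insert v F"]) simp
qed

lemma spectral:
  fixes A :: "complex^'n^'n"
  assumes herm: "cadj A = A"
  shows "\<exists>U lam. unitary_op U \<and> A = U ** diag_op lam ** cadj U"
proof -
  obtain F where F: "finite F" "card F = CARD('n)" "ONE A F" using ONE_exists[OF herm, of "CARD('n)"] by auto
  obtain h where h: "bij_betw h (UNIV::'n set) F"
    using finite_same_card_bij[of "UNIV::'n set" F] F by auto
  have hF: "h j \<in> F" for j using h by (auto simp: bij_betw_def)
  have hinj: "h i = h j \<longleftrightarrow> i = j" for i j using h by (auto simp: bij_betw_def inj_on_def)
  define lam where "lam j = (SOME l::real. A *v h j = complex_of_real l *s h j)" for j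
  have lam: "A *v h j = complex_of_real (lam j) *s h j" for j
    unfolding lam_def by (rule someI_ex) (use F(3) hF in \<open>auto simp: ONE_def\<close>)
  define U where "U = (\<chi> i j. h j $ i)"
  have "cadj U ** U = mat 1"
  proof -
    have "(cadj U ** U) $ i $ j = cinner (h i) (h j)" for i j
      unfolding U_def cadj_def matrix_matrix_mult_def cinner_def by simp
    moreover have "cinner (h i) (h j) = (if i = j then 1 else 0)" for i j
    proof (cases "i = j")
      case True then show ?thesis using F(3) hF unfolding ONE_def by auto
    next
      case False then have "h i \<noteq> h j" using hinj by simp
      then show ?thesis using F(3) hF False unfolding ONE_def by auto
    qed
    ultimately show ?thesis by (simp add: vec_eq_iff mat_def)
  qed
  moreover then have "U ** cadj U = mat 1" using matrix_left_right_inverse by blast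
  ultimately have uni: "unitary_op U" unfolding unitary_op_def by simp
  have AU: "A ** U = U ** diag_op lam"
  proof -
    have "(A ** U) $ i $ j = (A *v h j) $ i" for i j
      unfolding U_def matrix_matrix_mult_def matrix_vector_mult_def by simp
    moreover have "(U ** diag_op lam) $ i $ j = complex_of_real (lam j) * h j $ i" for i j
    proof -
      have "(U ** diag_op lam) $ i $ j = (\<Sum>k\<in>UNIV. h k $ i * (if k = j then complex_of_real (lam k) else 0))"
        unfolding U_def matrix_matrix_mult_def diag_op_def by simp
      also have "\<dots> = (\<Sum>k\<in>UNIV. if k = j then h k $ i * complex_of_real (lam j) else 0)"
        by (rule sum.cong) auto
      also have "\<dots> = complex_of_real (lam j) * h j $ i" by simp
      finally show ?thesis .
    qed
    ultimately show ?thesis using lam by (simp add: vec_eq_iff)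
  qed
  have "A = A ** (U ** cadj U)" using uni unfolding unitary_op_def by simp
  also have "\<dots> = U ** diag_op lam ** cadj U" by (simp add: matrix_mul_assoc AU)
  finally show ?thesis using uni by blast
qed

lemma cadj_mult: "cadj ((A::complex^'n^'m) ** B) = cadj B ** cadj A"
  unfolding cadj_def matrix_matrix_mult_def by (simp add: vec_eq_iff mult.commute)

lemma cadj_cadj[simp]: "cadj (cadj A) = A"
  unfolding cadj_def by (simp add: vec_eq_iff)

lemma cadj_diag[simp]: "cadj (diag_op l) = diag_op l"
  unfolding cadj_def diag_op_def by (simp add: vec_eq_iff)

lemma cadj_add: "cadj (A + B) = cadj A + cadj B"
  unfolding cadj_def by (simp add: vec_eq_iff)

lemma cadj_scaleR: "cadj (c *\<^sub>R A) = c *\<^sub>R cadj A"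
  unfolding cadj_def by (simp add: vec_eq_iff)

lemma cadj_mat[simp]: "cadj (mat c :: complex^'n^'n) = mat (cnj c)"
  unfolding cadj_def mat_def by (simp add: vec_eq_iff)

lemma mult_diag_entry: "((M::complex^'n^'m) ** diag_op l) $ i $ k = M$i$k * complex_of_real (l k)"
proof -
  have "(M ** diag_op l) $ i $ k = (\<Sum>j\<in>UNIV. M$i$j * (if j = k then complex_of_real (l j) else 0))"
    unfolding matrix_matrix_mult_def diag_op_def by simp
  also have "\<dots> = (\<Sum>j\<in>UNIV. if j = k then M$i$j * complex_of_real (l k) else 0)"
    by (rule sum.cong) auto
  finally show ?thesis by simp
qed

lemma diag_entry: "((M::complex^'n^'m) ** diag_op l ** cadj N) $ i $ j
    = (\<Sum>c\<in>UNIV. complex_of_real (l c) * (M$i$c * cnj (N$j$c)))"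
  unfolding matrix_matrix_mult_def[of "M ** diag_op l"] by (simp add: mult_diag_entry cadj_def mult_ac)

lemma cnj_sq1: "z * cnj z = complex_of_real ((cmod z)^2)" by (simp only: complex_norm_square)
lemma cnj_sq2: "cnj z * z = complex_of_real ((cmod z)^2)" by (simp only: complex_norm_square mult.commute)

lemma diag_entry_self: "((M::complex^'n^'m) ** diag_op l ** cadj M) $ i $ i
    = complex_of_real (\<Sum>c\<in>UNIV. l c * (cmod (M$i$c))^2)"
  unfolding diag_entry of_real_sum
  by (rule sum.cong) (auto simp: cnj_sq1)

lemma gram_entry: "((M::complex^'n^'m) ** cadj M) $ i $ i = complex_of_real (\<Sum>c\<in>UNIV. (cmod (M$i$c))^2)"
  unfolding matrix_matrix_mult_def cadj_def of_real_sum
  by (simp add: cnj_sq1 cnj_sq2)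

lemma gram_entry': "(cadj (M::complex^'n^'m) ** M) $ i $ i = complex_of_real (\<Sum>c\<in>UNIV. (cmod (M$c$i))^2)"
  unfolding matrix_matrix_mult_def cadj_def of_real_sum
  by (simp add: cnj_sq1 cnj_sq2)

lemma diag_mult: "diag_op a ** diag_op b = diag_op (\<lambda>i. a i * b i)"
  by (simp add: vec_eq_iff mult_diag_entry) (simp add: diag_op_def)

lemma trace_diag: "trace (diag_op l) = complex_of_real (\<Sum>i\<in>UNIV. l i)"
  unfolding trace_def diag_op_def by (simp add: of_real_sum)

lemma trace_unitary_conj: "unitary_op U \<Longrightarrow> trace (U ** A ** cadj U) = trace A"
  unfolding unitary_op_def
  by (metis matrix_mul_assoc matrix_mul_lid trace_mul_sym)

lemma cinner_axis: "cinner (axis i 1) y = y $ i"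
proof -
  have "cinner (axis i 1) y = (\<Sum>k\<in>UNIV. if k = i then y $ k else 0)"
    unfolding cinner_def axis_def by (rule sum.cong) auto
  then show ?thesis by simp
qed

lemma mv_axis: "((A::complex^'n^'m) *v axis j 1) $ i = A $ i $ j"
proof -
  have "(A *v axis j 1) $ i = (\<Sum>k\<in>UNIV. A $ i $ k * (if k = j then 1 else 0))"
    unfolding matrix_vector_mult_def axis_def by simp
  also have "\<dots> = (\<Sum>k\<in>UNIV. if k = j then A $ i $ k else 0)" by (rule sum.cong) auto
  finally show ?thesis by simp
qed

lemma positive_hermitian:
  fixes A :: "complex^'n^'n"
  assumes pos: "positive_op A"
  shows "cadj A = A"
proof -
  have q: "Im (cinner x (A *v x)) = 0" for x using pos unfolding positive_op_def cinner_def by blast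
  have expand: "cinner (axis a 1 + c *s axis b 1) (A *v (axis a 1 + c *s axis b 1))
      = A$a$a + c * A$a$b + cnj c * A$b$a + cnj c * c * A$b$b" for a b c
    by (simp add: matrix_vector_add matrix_vector_scale cinner_add_left cinner_add_right
          cinner_scale_left cinner_scale_right cinner_axis mv_axis algebra_simps)
  have "A $ b $ a = cnj (A $ a $ b)" for a b
  proof -
    have d: "Im (A$a$a) = 0" for a using q[of "axis a 1 + 0 *s axis a 1"] expand[of a 0 a] by simp
    have 1: "Im (A$a$a + A$a$b + A$b$a + A$b$b) = 0" using q[of "axis a 1 + 1 *s axis b 1"] expand[of a 1 b] by simp
    have 2: "Im (A$a$a + \<i> * A$a$b + cnj \<i> * A$b$a + cnj \<i> * \<i> * A$b$b) = 0"
      using q[of "axis a 1 + \<i> *s axis b 1"] expand[of a "\<i>" b] by simp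
    from 1 2 d[of a] d[of b] show ?thesis by (simp add: complex_eq_iff)
  qed
  then have h: "cnj (A $ b $ a) = A $ a $ b" for a b by (metis complex_cnj_cnj)
  show ?thesis unfolding cadj_def by (simp add: vec_eq_iff h)
qed

lemma diag_axis: "diag_op l *v axis i 1 = complex_of_real (l i) *s axis i 1"
  by (simp add: vec_eq_iff mv_axis) (simp add: diag_op_def axis_def)

lemma eig_nonneg:
  fixes A :: "complex^'n^'n"
  assumes pos: "positive_op A" and uni: "unitary_op U" and dec: "A = U ** diag_op l ** cadj U"
  shows "l i \<ge> 0"
proof -
  define x where "x = U *v axis i 1"
  have "A *v x = (U ** diag_op l ** (cadj U ** U)) *v axis i 1"
    unfolding x_def dec by (simp add: matrix_vector_mul_assoc matrix_mul_assoc)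
  also have "\<dots> = complex_of_real (l i) *s x"
    using uni unfolding unitary_op_def x_def
    by (simp add: matrix_vector_mul_assoc[symmetric] diag_axis matrix_vector_scale)
  finally have Ax: "A *v x = complex_of_real (l i) *s x" .
  have xx: "cinner x x = 1"
  proof -
    have "cinner x x = cinner (axis i 1) (cadj U *v x)"
      using cinner_adj[of "axis i 1" "cadj U" x] unfolding x_def by simp
    also have "\<dots> = 1" using uni unfolding unitary_op_def x_def
      by (simp add: matrix_vector_mul_assoc cinner_axis)
    finally show ?thesis .
  qed
  have "0 \<le> Re (cinner x (A *v x))" using pos unfolding positive_op_def cinner_def by blast
  then show ?thesis unfolding Ax cinner_scale_right xx by simp
qed

lemma entropy_decomp:
  fixes A :: "complex^'n^'n"
  assumes herm: "cadj A = A"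
  shows "\<exists>U lam. unitary_op U \<and> A = U ** diag_op lam ** cadj U \<and>
            vN_entropy A = - (\<Sum>i\<in>UNIV. lam i * ln (lam i))"
proof -
  define P where "P = (\<lambda>(U::complex^'n^'n, lam::'n \<Rightarrow> real). unitary_op U \<and> A = U ** diag_op lam ** cadj U)"
  have ex: "\<exists>x. P x" using spectral[OF herm] unfolding P_def by auto
  obtain U lam where e: "(SOME x. P x) = (U, lam)" by (cases "SOME x. P x") auto
  have "P (U, lam)" using someI_ex[OF ex] e by simp
  then have uni: "unitary_op U" and dec: "A = U ** diag_op lam ** cadj U" unfolding P_def by auto
  have mf: "mat_fun ln A = U ** diag_op (ln \<circ> lam) ** cadj U"
    using e unfolding mat_fun_def P_def by simp
  have "A ** mat_fun ln A = (U ** diag_op lam ** cadj U) ** (U ** diag_op (ln \<circ> lam) ** cadj U)"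
    unfolding mf using dec by simp
  also have "\<dots> = U ** diag_op lam ** (cadj U ** U) ** diag_op (ln \<circ> lam) ** cadj U"
    by (simp add: matrix_mul_assoc)
  also have "\<dots> = U ** (diag_op lam ** diag_op (ln \<circ> lam)) ** cadj U"
    using uni unfolding unitary_op_def by (simp add: matrix_mul_assoc)
  also have "\<dots> = U ** diag_op (\<lambda>i. lam i * ln (lam i)) ** cadj U"
    by (simp add: diag_mult comp_def)
  finally have "trace (A ** mat_fun ln A) = trace (diag_op (\<lambda>i. lam i * ln (lam i)))"
    using trace_unitary_conj[OF uni] by simp
  also have "\<dots> = complex_of_real (\<Sum>i\<in>UNIV. lam i * ln (lam i))" by (rule trace_diag)
  finally have "trace (A ** mat_fun ln A) = complex_of_real (\<Sum>i\<in>UNIV. lam i * ln (lam i))" .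
  then have "vN_entropy A = - (\<Sum>i\<in>UNIV. lam i * ln (lam i))" unfolding vN_entropy_def by simp
  then show ?thesis using uni dec by blast
qed

lemma xlnx_key:
  fixes s c :: real
  assumes "s \<ge> 0" "c > 0"
  shows "s * ln c + s - c \<le> s * ln s"
proof (cases "s = 0")
  case True then show ?thesis using assms by simp
next
  case False
  then have sp: "s > 0" using assms by simp
  have "ln (c / s) \<le> c / s - 1" using ln_le_minus_one[of "c/s"] sp assms by simp
  then have "ln c - ln s \<le> c / s - 1" using ln_div[of c s] sp assms by simp
  then have "s * (ln c - ln s) \<le> s * (c / s - 1)" using sp by (simp add: mult_left_mono)
  then show ?thesis using sp by (simp add: algebra_simps)
qed

lemma row_ineq:
  fixes d s :: "'j \<Rightarrow> real"
  assumes fin: "finite J" and d0: "\<And>j. j \<in> J \<Longrightarrow> d j \<ge> 0" and s0: "\<And>j. j \<in> J \<Longrightarrow> s j \<ge> 0"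
    and t1: "(\<Sum>j\<in>J. d j) \<le> 1"
  shows "(\<Sum>j\<in>J. d j * s j) * ln (\<Sum>j\<in>J. d j * s j) \<le> (\<Sum>j\<in>J. d j * (s j * ln (s j)))"
proof -
  define y where "y = (\<Sum>j\<in>J. d j * s j)"
  define t where "t = (\<Sum>j\<in>J. d j)"
  have y0: "y \<ge> 0" unfolding y_def using d0 s0 by (simp add: sum_nonneg)
  show ?thesis
  proof (cases "y = 0")
    case True
    then have "\<forall>j\<in>J. d j * s j = 0" using sum_nonneg_eq_0_iff[OF fin, of "\<lambda>j. d j * s j"] d0 s0
      unfolding y_def by auto
    then have "(\<Sum>j\<in>J. d j * (s j * ln (s j))) = 0" by (intro sum.neutral) auto
    then show ?thesis using True unfolding y_def by simp
  next
    case False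
    then have yp: "y > 0" using y0 by simp
    have "t > 0"
    proof (rule ccontr)
      assume "\<not> t > 0"
      then have "t = 0" using d0 unfolding t_def by (meson not_less sum_nonneg antisym)
      then have "\<forall>j\<in>J. d j = 0" using sum_nonneg_eq_0_iff[OF fin] d0 unfolding t_def by auto
      then have "y = 0" unfolding y_def by simp
      then show False using yp by simp
    qed
    define c where "c = y / t"
    have cp: "c > 0" unfolding c_def using yp \<open>t > 0\<close> by simp
    have "(\<Sum>j\<in>J. d j * (s j * ln c + s j - c)) \<le> (\<Sum>j\<in>J. d j * (s j * ln (s j)))"
      by (rule sum_mono) (use xlnx_key[OF s0 cp] d0 in \<open>auto intro: mult_left_mono\<close>)
    moreover have "(\<Sum>j\<in>J. d j * (s j * ln c + s j - c)) = y * ln c + y - c * t"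
      unfolding y_def t_def by (simp add: algebra_simps sum.distrib sum_subtractf sum_distrib_left sum_distrib_right)
    moreover have "y * ln c + y - c * t = y * ln y - y * ln t"
      unfolding c_def using yp \<open>t > 0\<close> by (simp add: ln_div algebra_simps)
    moreover have "ln t \<le> 0" using \<open>t > 0\<close> t1 unfolding t_def by simp
    ultimately show ?thesis using yp unfolding y_def[symmetric]
      by (smt (verit) mult_nonneg_nonpos)
  qed
qed

lemma entropy_ineq:
  fixes d :: "'a \<Rightarrow> 'j \<Rightarrow> real" and s :: "'j \<Rightarrow> real"
  assumes finI: "finite I" and finJ: "finite J"
    and d0: "\<And>a j. a \<in> I \<Longrightarrow> j \<in> J \<Longrightarrow> d a j \<ge> 0" and s0: "\<And>j. j \<in> J \<Longrightarrow> s j \<ge> 0"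
    and row: "\<And>a. a \<in> I \<Longrightarrow> (\<Sum>j\<in>J. d a j) \<le> 1"
    and col: "\<And>j. j \<in> J \<Longrightarrow> (\<Sum>a\<in>I. d a j) = 1"
  shows "- (\<Sum>j\<in>J. s j * ln (s j)) \<le> - (\<Sum>a\<in>I. (\<Sum>j\<in>J. d a j * s j) * ln (\<Sum>j\<in>J. d a j * s j))"
proof -
  have "(\<Sum>a\<in>I. (\<Sum>j\<in>J. d a j * s j) * ln (\<Sum>j\<in>J. d a j * s j))
      \<le> (\<Sum>a\<in>I. \<Sum>j\<in>J. d a j * (s j * ln (s j)))"
    by (rule sum_mono) (rule row_ineq[OF finJ]; use d0 s0 row in auto)
  also have "\<dots> = (\<Sum>j\<in>J. (\<Sum>a\<in>I. d a j) * (s j * ln (s j)))"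
    by (subst sum.swap) (simp add: sum_distrib_right)
  also have "\<dots> = (\<Sum>j\<in>J. s j * ln (s j))" using col by simp
  finally show ?thesis by simp
qed

lemma matrix_add_rdistrib': "((A::complex^'n^'m) + B) ** C = A ** C + B ** C"
  by (simp add: vec_eq_iff matrix_matrix_mult_def sum.distrib distrib_right)

lemma sum_mmult_left: "(\<Sum>r\<in>S. (A r :: complex^'n^'n)) ** B = (\<Sum>r\<in>S. A r ** B)"
  by (induction S rule: infinite_finite_induct) (auto simp: matrix_add_rdistrib')

lemma sum_mmult_right: "B ** (\<Sum>r\<in>S. (A r :: complex^'n^'n)) = (\<Sum>r\<in>S. B ** A r)"
  by (induction S rule: infinite_finite_induct) (auto simp: matrix_add_ldistrib)

lemma trace_zero[simp]: "trace (0::complex^'n^'n) = 0"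
  by (simp add: trace_def)

lemma trace_sum: "trace (\<Sum>r\<in>S. (A r :: complex^'n^'n)) = (\<Sum>r\<in>S. trace (A r))"
  by (induction S rule: infinite_finite_induct) (auto simp: trace_add)

lemma scaleR_entry: "(c *\<^sub>R (A :: complex^'n^'m)) $ i $ j = complex_of_real c * A $ i $ j"
  by (simp only: vector_scaleR_component) (simp add: scaleR_conv_of_real)

lemma trace_scaleR: "trace (c *\<^sub>R (A :: complex^'n^'n)) = complex_of_real c * trace A"
  unfolding trace_def scaleR_entry by (simp add: sum_distrib_left)

lemma scaleR_mmult_left: "(c *\<^sub>R (A :: complex^'n^'m)) ** B = c *\<^sub>R (A ** B)"
  by (simp add: vec_eq_iff matrix_matrix_mult_def scaleR_sum_right)

lemma scaleR_mmult_right: "(A :: complex^'n^'m) ** (c *\<^sub>R B) = c *\<^sub>R (A ** B)"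
  by (simp add: vec_eq_iff matrix_matrix_mult_def scaleR_sum_right)

lemma unitary_mult: "unitary_op W \<Longrightarrow> unitary_op U \<Longrightarrow> unitary_op ((W::complex^'n^'n) ** U)"
  unfolding unitary_op_def cadj_mult
  by (metis matrix_mul_assoc matrix_mul_lid)

lemma unitary_cadj: "unitary_op U \<Longrightarrow> unitary_op (cadj U)"
  unfolding unitary_op_def by simp

lemma mat_entry_sum: "(\<Sum>r\<in>S. (A r :: complex^'n^'m)) $ i $ j = (\<Sum>r\<in>S. A r $ i $ j)"
  by (induction S rule: infinite_finite_induct) auto

lemma matrix_diff_ldistrib': "(A::complex^'n^'m) ** (B - C) = A ** B - A ** C"
  by (simp add: vec_eq_iff matrix_matrix_mult_def sum_subtractf right_diff_distrib)

lemma core: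
  fixes rho W H :: "complex^'n^'n" and Pf :: "'r::finite \<Rightarrow> complex^'n^'n" and \<beta> :: real
  assumes hrho: "cadj rho = rho" and prho: "positive_op rho" and trho: "trace rho = 1"
    and uW: "unitary_op W"
    and hP: "\<And>r. cadj (Pf r) = Pf r"
    and sumP: "(\<Sum>r\<in>UNIV. Pf r ** Pf r) = mat 1"
    and comm: "\<And>r. H ** Pf r = Pf r ** H"
  shows "let sigma = W ** rho ** cadj W;
         p = (\<lambda>r. Re (trace (Pf r ** sigma ** Pf r)));
         rho_plus = (\<lambda>r. (1 / p r) *\<^sub>R (Pf r ** sigma ** Pf r));
         Q = (\<lambda>r. Re (trace (H ** (rho_plus r - sigma))));
         Sigma = (\<lambda>r. - ln (p r) + vN_entropy (rho_plus r) - vN_entropy rho - \<beta> * Q r)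
     in (\<Sum>r | p r > 0. p r * Sigma r) \<ge> 0"
proof -
  define sigma where "sigma = W ** rho ** cadj W"
  define X where "X r = Pf r ** sigma ** Pf r" for r
  define p where "p r = Re (trace (X r))" for r
  define rp where "rp r = (1 / p r) *\<^sub>R X r" for r
  define Q where "Q r = Re (trace (H ** (rp r - sigma)))" for r
  define Sg where "Sg r = - ln (p r) + vN_entropy (rp r) - vN_entropy rho - \<beta> * Q r" for r
  obtain U0 s where uU0: "unitary_op U0" and rdec: "rho = U0 ** diag_op s ** cadj U0"
    and Srho: "vN_entropy rho = - (\<Sum>i\<in>UNIV. s i * ln (s i))"
    using entropy_decomp[OF hrho] by blast
  have s0: "s j \<ge> 0" for j by (rule eig_nonneg[OF prho uU0 rdec])
  define V where "V = W ** U0"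
  have uV: "unitary_op V" unfolding V_def by (rule unitary_mult[OF uW uU0])
  have sig: "sigma = V ** diag_op s ** cadj V"
    unfolding sigma_def V_def rdec by (simp add: cadj_mult matrix_mul_assoc)
  have hsig: "cadj sigma = sigma" unfolding sig by (simp add: cadj_mult matrix_mul_assoc)
  have hX: "cadj (X r) = X r" for r unfolding X_def by (simp add: cadj_mult hP hsig matrix_mul_assoc)
  have hrp: "cadj (rp r) = rp r" for r unfolding rp_def by (simp add: cadj_scaleR hX)
  have ex1: "\<forall>r. \<exists>U. \<exists>lam. unitary_op U \<and> rp r = U ** diag_op lam ** cadj U \<and>
            vN_entropy (rp r) = - (\<Sum>i\<in>UNIV. lam i * ln (lam i))"
    using entropy_decomp[OF hrp] by blast
  obtain Ur where ex2: "\<forall>r. \<exists>lam. unitary_op (Ur r) \<and> rp r = Ur r ** diag_op lam ** cadj (Ur r) \<and>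
            vN_entropy (rp r) = - (\<Sum>i\<in>UNIV. lam i * ln (lam i))"
    using choice[OF ex1] by blast
  obtain mu where "\<forall>r. unitary_op (Ur r) \<and> rp r = Ur r ** diag_op (mu r) ** cadj (Ur r) \<and>
            vN_entropy (rp r) = - (\<Sum>i\<in>UNIV. mu r i * ln (mu r i))"
    using choice[OF ex2] by blast
  then have uUr: "\<And>r. unitary_op (Ur r)" and rpdec: "\<And>r. rp r = Ur r ** diag_op (mu r) ** cadj (Ur r)"
    and Srp: "\<And>r. vN_entropy (rp r) = - (\<Sum>i\<in>UNIV. mu r i * ln (mu r i))" by blast+
  define M where "M r = cadj (Ur r) ** Pf r ** V" for r
  define x where "x r k = Re ((cadj (Ur r) ** X r ** Ur r) $ k $ k)" for r k
  define d where "d rk j = (cmod (M (fst rk) $ (snd rk) $ j))^2" for rk j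
  have UXU: "cadj (Ur r) ** X r ** Ur r = M r ** diag_op s ** cadj (M r)" for r
    unfolding X_def sig M_def by (simp add: cadj_mult hP matrix_mul_assoc)
  have xd: "x r k = (\<Sum>j\<in>UNIV. d (r,k) j * s j)" for r k
    unfolding x_def UXU diag_entry_self d_def by (simp add: mult.commute)
  have x0: "x r k \<ge> 0" for r k unfolding xd d_def using s0 by (simp add: sum_nonneg)
  have VV: "Y ** V ** cadj V = Y" "Y ** cadj V ** V = Y" for Y
    using uV unfolding unitary_op_def by (metis matrix_mul_assoc matrix_mul_rid)+
  have UU: "Y ** Ur r ** cadj (Ur r) = Y" "Y ** cadj (Ur r) ** Ur r = Y" for Y r
    using uUr[of r] unfolding unitary_op_def by (metis matrix_mul_assoc matrix_mul_rid)+
  have row: "(\<Sum>j\<in>UNIV. d rk j) \<le> 1" for rk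
  proof -
    obtain r k where rk: "rk = (r,k)" by (cases rk)
    define g where "g r' = (\<Sum>l\<in>UNIV. (cmod ((Pf r' ** Ur r) $ l $ k))^2)" for r'
    have MM: "M r ** cadj (M r) = cadj (Pf r ** Ur r) ** (Pf r ** Ur r)"
      unfolding M_def by (simp add: cadj_mult hP matrix_mul_assoc VV)
    have "complex_of_real (\<Sum>j\<in>UNIV. d rk j) = (M r ** cadj (M r)) $ k $ k"
      unfolding gram_entry rk d_def by simp
    also have "\<dots> = complex_of_real (g r)" unfolding MM gram_entry' g_def ..
    finally have dg: "(\<Sum>j\<in>UNIV. d rk j) = g r" using of_real_eq_iff by blast
    have gi: "complex_of_real (g r') = (cadj (Ur r) ** (Pf r' ** Pf r') ** Ur r) $ k $ k" for r'
    proof -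
      have "cadj (Pf r' ** Ur r) ** (Pf r' ** Ur r) = cadj (Ur r) ** (Pf r' ** Pf r') ** Ur r"
        by (simp add: cadj_mult hP matrix_mul_assoc)
      then show ?thesis unfolding g_def using gram_entry'[of "Pf r' ** Ur r" k] by simp
    qed
    have "complex_of_real (\<Sum>r'\<in>UNIV. g r') = (\<Sum>r'\<in>UNIV. (cadj (Ur r) ** (Pf r' ** Pf r') ** Ur r) $ k $ k)"
      unfolding of_real_sum gi ..
    also have "\<dots> = (cadj (Ur r) ** (\<Sum>r'\<in>UNIV. Pf r' ** Pf r') ** Ur r) $ k $ k"
      by (simp add: mat_entry_sum sum_mmult_left sum_mmult_right)
    also have "\<dots> = 1" using uUr[of r] unfolding sumP unitary_op_def by (simp, simp add: mat_def)
    finally have "(\<Sum>r'\<in>UNIV. g r') = 1" by (metis of_real_eq_1_iff)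
    moreover have "g r \<le> (\<Sum>r'\<in>UNIV. g r')"
      by (rule member_le_sum) (auto simp: g_def sum_nonneg)
    ultimately show ?thesis using dg by simp
  qed
  have col: "(\<Sum>rk\<in>UNIV. d rk j) = 1" for j
  proof -
    have "(\<Sum>rk\<in>UNIV. d rk j) = (\<Sum>r\<in>UNIV. \<Sum>k\<in>UNIV. (cmod (M r $ k $ j))^2)"
      unfolding d_def by (simp add: sum.cartesian_product' UNIV_Times_UNIV[symmetric] del: UNIV_Times_UNIV)
    then have "complex_of_real (\<Sum>rk\<in>UNIV. d rk j) = (\<Sum>r\<in>UNIV. complex_of_real (\<Sum>k\<in>UNIV. (cmod (M r $ k $ j))^2))"
      by (simp only: of_real_sum)
    also have "\<dots> = (\<Sum>r\<in>UNIV. (cadj (M r) ** M r) $ j $ j)"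
      unfolding gram_entry' ..
    also have "\<dots> = (\<Sum>r\<in>UNIV. (cadj V ** (Pf r ** Pf r) ** V) $ j $ j)"
      unfolding M_def by (rule sum.cong) (simp_all add: cadj_mult hP matrix_mul_assoc UU)
    also have "\<dots> = (cadj V ** (\<Sum>r\<in>UNIV. Pf r ** Pf r) ** V) $ j $ j"
      by (simp add: mat_entry_sum sum_mmult_left sum_mmult_right)
    also have "\<dots> = 1" using uV unfolding sumP unitary_op_def by (simp, simp add: mat_def)
    finally show ?thesis by (metis of_real_eq_1_iff)
  qed
  have ent: "vN_entropy rho \<le> (\<Sum>r\<in>UNIV. - (\<Sum>k\<in>UNIV. x r k * ln (x r k)))"
  proof -
    have "- (\<Sum>j\<in>UNIV. s j * ln (s j)) \<le> - (\<Sum>rk\<in>UNIV. (\<Sum>j\<in>UNIV. d rk j * s j) * ln (\<Sum>j\<in>UNIV. d rk j * s j))"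
      by (rule entropy_ineq) (use s0 row col in \<open>auto simp: d_def\<close>)
    also have "\<dots> = - (\<Sum>rk\<in>UNIV. x (fst rk) (snd rk) * ln (x (fst rk) (snd rk)))"
      by (simp add: xd)
    also have "\<dots> = (\<Sum>r\<in>UNIV. - (\<Sum>k\<in>UNIV. x r k * ln (x r k)))"
      by (simp add: sum_negf sum.cartesian_product' UNIV_Times_UNIV[symmetric] del: UNIV_Times_UNIV)
    finally show ?thesis unfolding Srho .
  qed
  have UU1: "cadj (Ur r) ** Ur r = mat 1" for r using uUr[of r] unfolding unitary_op_def by simp
  have px: "p r = (\<Sum>k\<in>UNIV. x r k)" for r
  proof -
    have "trace (X r) = trace (cadj (Ur r) ** X r ** Ur r)"
      using trace_unitary_conj[OF unitary_cadj[OF uUr[of r]], of "X r"] by simp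
    then show ?thesis unfolding p_def x_def trace_def by (simp add: Re_sum)
  qed
  have p0: "p r \<ge> 0" for r unfolding px using x0 by (simp add: sum_nonneg)
  have sump: "(\<Sum>r\<in>UNIV. p r) = 1"
  proof -
    have "trace (X r) = trace ((Pf r ** Pf r) ** sigma)" for r
      unfolding X_def by (metis matrix_mul_assoc trace_mul_sym)
    then have "(\<Sum>r\<in>UNIV. trace (X r)) = trace ((\<Sum>r\<in>UNIV. Pf r ** Pf r) ** sigma)"
      by (simp add: trace_sum sum_mmult_left)
    also have "\<dots> = 1" unfolding sumP sigma_def using trace_unitary_conj[OF uW] trho by simp
    finally show ?thesis unfolding p_def by (simp add: Re_sum[symmetric])
  qed
  have sump_pos: "(\<Sum>r | p r > 0. p r) = 1"
  proof -
    have "(\<Sum>r\<in>UNIV. p r) = (\<Sum>r | p r > 0. p r)"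
      by (rule sum.mono_neutral_right) (use p0 in \<open>auto simp: not_less intro: antisym\<close>)
    then show ?thesis using sump by simp
  qed
  define T where "T r = - (\<Sum>k\<in>UNIV. x r k * ln (x r k))" for r
  have T_pos: "T r = - p r * ln (p r) + p r * vN_entropy (rp r)" if pp: "p r > 0" for r
  proof -
    have Xp: "X r = p r *\<^sub>R rp r" unfolding rp_def using pp by simp
    have "cadj (Ur r) ** rp r ** Ur r = diag_op (mu r)"
      unfolding rpdec by (simp add: matrix_mul_assoc UU UU1)
    then have "cadj (Ur r) ** X r ** Ur r = p r *\<^sub>R diag_op (mu r)"
      unfolding Xp by (simp add: scaleR_mmult_left scaleR_mmult_right)
    then have xm: "x r k = p r * mu r k" for k
      unfolding x_def by (simp add: scaleR_entry diag_op_def)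
    have mu0: "mu r k \<ge> 0" for k using x0[of r k] pp unfolding xm by (simp add: zero_le_mult_iff)
    have mu1: "(\<Sum>k\<in>UNIV. mu r k) = 1"
      using px[of r] pp unfolding xm by (simp add: sum_distrib_left[symmetric])
    have tmx: "x r k * ln (x r k) = p r * ln (p r) * mu r k + p r * (mu r k * ln (mu r k))" for k
    proof (cases "mu r k = 0")
      case True then show ?thesis unfolding xm by simp
    next
      case False
      then have "mu r k > 0" using mu0[of k] by simp
      then show ?thesis unfolding xm using pp by (simp add: ln_mult algebra_simps)
    qed
    have "T r = - (p r * ln (p r) * (\<Sum>k\<in>UNIV. mu r k) + p r * (\<Sum>k\<in>UNIV. mu r k * ln (mu r k)))"
      unfolding T_def tmx by (simp add: sum.distrib sum_distrib_left)
    then show ?thesis unfolding mu1 Srp by simp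
  qed
  have T_zero: "T r = 0" if pz: "p r = 0" for r
  proof -
    have "\<forall>k\<in>UNIV. x r k = 0" using pz unfolding px using sum_nonneg_eq_0_iff[of UNIV "x r"] x0 by auto
    then show ?thesis unfolding T_def by simp
  qed
  have X0: "X r = 0" if pz: "p r = 0" for r
  proof -
    define N where "N = Pf r ** V"
    have XN: "X r = N ** diag_op s ** cadj N"
      unfolding X_def sig N_def by (simp add: cadj_mult hP matrix_mul_assoc)
    have "p r = (\<Sum>a\<in>UNIV. \<Sum>c\<in>UNIV. s c * (cmod (N $ a $ c))^2)"
      unfolding p_def XN trace_def diag_entry_self by (simp add: Re_sum)
    then have "\<forall>a\<in>UNIV. (\<Sum>c\<in>UNIV. s c * (cmod (N $ a $ c))^2) = 0"
      using pz sum_nonneg_eq_0_iff[of UNIV "\<lambda>a. \<Sum>c\<in>UNIV. s c * (cmod (N $ a $ c))^2"] s0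
      by (simp add: sum_nonneg)
    then have z: "s c * (cmod (N $ a $ c))^2 = 0" for a c
      using sum_nonneg_eq_0_iff[of UNIV "\<lambda>c. s c * (cmod (N $ a $ c))^2"] s0 by simp
    have "(N ** diag_op s ** cadj N) $ a $ b = 0" for a b
      unfolding diag_entry
    proof (rule sum.neutral, rule ballI)
      fix c
      show "complex_of_real (s c) * (N $ a $ c * cnj (N $ b $ c)) = 0"
        using z[of c a] by auto
    qed
    then show ?thesis unfolding XN by (simp add: vec_eq_iff)
  qed
  have HX: "(\<Sum>r\<in>UNIV. Re (trace (H ** X r))) = Re (trace (H ** sigma))"
  proof -
    have "trace (H ** X r) = trace (H ** (Pf r ** Pf r) ** sigma)" for r
    proof -
      have "trace (H ** X r) = trace (Pf r ** (H ** (Pf r ** sigma)))"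
        unfolding X_def by (metis matrix_mul_assoc trace_mul_sym)
      also have "Pf r ** (H ** (Pf r ** sigma)) = H ** (Pf r ** Pf r) ** sigma"
        by (simp add: matrix_mul_assoc comm[symmetric])
      finally show ?thesis .
    qed
    then have "(\<Sum>r\<in>UNIV. trace (H ** X r)) = trace (H ** (\<Sum>r\<in>UNIV. Pf r ** Pf r) ** sigma)"
      by (simp add: trace_sum sum_mmult_left sum_mmult_right)
    then show ?thesis unfolding sumP by (simp add: Re_sum[symmetric])
  qed
  have pQ: "p r * Q r = Re (trace (H ** X r)) - p r * Re (trace (H ** sigma))" if pp: "p r > 0" for r
  proof -
    define A1 where "A1 = Re (trace (H ** X r))"
    define B1 where "B1 = Re (trace (H ** sigma))"
    have qe: "Q r = (1 / p r) * A1 - B1"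
      unfolding Q_def rp_def A1_def B1_def by (simp add: matrix_diff_ldistrib' trace_sub scaleR_mmult_right trace_scaleR)
    have "p r * Q r = (p r * (1 / p r)) * A1 - p r * B1" unfolding qe by (simp add: algebra_simps)
    also have "p r * (1 / p r) = 1" using pp by simp
    finally show ?thesis unfolding A1_def B1_def by simp
  qed
  have sumQ: "(\<Sum>r | p r > 0. p r * Q r) = 0"
  proof -
    have "(\<Sum>r | p r > 0. p r * Q r) = (\<Sum>r | p r > 0. Re (trace (H ** X r))) - (\<Sum>r | p r > 0. p r) * Re (trace (H ** sigma))"
      by (simp add: pQ sum_subtractf sum_distrib_right)
    also have "(\<Sum>r | p r > 0. Re (trace (H ** X r))) = (\<Sum>r\<in>UNIV. Re (trace (H ** X r)))"
    proof (rule sum.mono_neutral_left, simp, simp, rule ballI)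
      fix i assume "i \<in> UNIV - {r. p r > 0}"
      then have "p i = 0" using p0[of i] by simp
      then show "Re (trace (H ** X i)) = 0" using X0 by simp
    qed
    finally show ?thesis unfolding HX sump_pos by simp
  qed
  have sumT: "(\<Sum>r | p r > 0. T r) = (\<Sum>r\<in>UNIV. T r)"
  proof (rule sum.mono_neutral_left, simp, simp, rule ballI)
    fix i assume "i \<in> UNIV - {r. p r > 0}"
    then have "p i = 0" using p0[of i] by simp
    then show "T i = 0" using T_zero by simp
  qed
  have "(\<Sum>r | p r > 0. p r * Sg r) = (\<Sum>r | p r > 0. T r - p r * vN_entropy rho - \<beta> * (p r * Q r))"
    by (rule sum.cong) (auto simp: Sg_def T_pos algebra_simps)
  also have "\<dots> = (\<Sum>r | p r > 0. T r) - (\<Sum>r | p r > 0. p r) * vN_entropy rho - \<beta> * (\<Sum>r | p r > 0. p r * Q r)"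
    by (simp add: sum_subtractf sum_distrib_left sum_distrib_right)
  also have "\<dots> = (\<Sum>r\<in>UNIV. T r) - vN_entropy rho" unfolding sumT sump_pos sumQ by simp
  finally have main: "(\<Sum>r | p r > 0. p r * Sg r) \<ge> 0" using ent unfolding T_def by simp
  show ?thesis unfolding Let_def using main unfolding Sg_def Q_def rp_def p_def X_def sigma_def .
qed

lemma sum_UNIV_prod: "(\<Sum>k\<in>(UNIV::('a::finite \<times> 'b::finite) set). f k) = (\<Sum>a\<in>UNIV. \<Sum>b\<in>UNIV. f (a,b))"
  by (simp add: sum.cartesian_product' UNIV_Times_UNIV[symmetric] del: UNIV_Times_UNIV)

lemma lift_U_mult: "(lift_U A :: complex^(('s::finite\<times>'m::finite)\<times>'u::finite)^(('s\<times>'m)\<times>'u)) ** lift_U B = lift_U (A ** B)"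
proof -
  have "(lift_U A ** lift_U B :: complex^(('s\<times>'m)\<times>'u)^(('s\<times>'m)\<times>'u)) $ i $ j = lift_U (A ** B) $ i $ j" for i j
  proof -
    have "(lift_U A ** lift_U B :: complex^(('s\<times>'m)\<times>'u)^(('s\<times>'m)\<times>'u)) $ i $ j
       = (\<Sum>a\<in>UNIV. \<Sum>b\<in>UNIV. if a = fst i then (if fst i = fst j then A $ snd i $ b * B $ b $ snd j else 0) else 0)"
      unfolding lift_U_def matrix_matrix_mult_def sum_UNIV_prod[where f="\<lambda>k. _ k"]
      by (simp; intro sum.cong refl; auto)
    also have "\<dots> = (\<Sum>a\<in>UNIV. if a = fst i then (if fst i = fst j then (\<Sum>b\<in>UNIV. A $ snd i $ b * B $ b $ snd j) else 0) else 0)"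
      by (rule sum.cong[OF refl]) (cases "fst i = fst j"; simp)
    also have "\<dots> = lift_U (A ** B) $ i $ j"
      unfolding lift_U_def matrix_matrix_mult_def by simp
    finally show ?thesis .
  qed
  then show ?thesis by (simp add: vec_eq_iff)
qed

lemma lift_U_add: "(lift_U (A + B) :: complex^(('s::finite\<times>'m::finite)\<times>'u::finite)^(('s\<times>'m)\<times>'u)) = lift_U A + lift_U B"
  unfolding lift_U_def by (auto simp: vec_eq_iff)

lemma lift_U_zero: "(lift_U 0 :: complex^(('s::finite\<times>'m::finite)\<times>'u::finite)^(('s\<times>'m)\<times>'u)) = 0"
  unfolding lift_U_def by (simp add: vec_eq_iff)

lemma lift_U_sum: "(lift_U (\<Sum>r\<in>S. A r) :: complex^(('s::finite\<times>'m::finite)\<times>'u::finite)^(('s\<times>'m)\<times>'u)) = (\<Sum>r\<in>S. lift_U (A r))"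
  by (induction S rule: infinite_finite_induct) (auto simp: lift_U_add lift_U_zero)

lemma lift_U_one: "(lift_U (mat 1) :: complex^(('s::finite\<times>'m::finite)\<times>'u::finite)^(('s\<times>'m)\<times>'u)) = mat 1"
  unfolding lift_U_def mat_def by (simp add: vec_eq_iff prod_eq_iff)

lemma cadj_lift_U: "cadj (lift_U A :: complex^(('s::finite\<times>'m::finite)\<times>'u::finite)^(('s\<times>'m)\<times>'u)) = lift_U (cadj A)"
  unfolding lift_U_def cadj_def by (simp add: vec_eq_iff)

lemma cadj_lift_SU: "cadj (lift_SU A :: complex^(('s::finite\<times>'m::finite)\<times>'u::finite)^(('s\<times>'m)\<times>'u)) = lift_SU (cadj A)"
  unfolding lift_SU_def cadj_def by (simp add: vec_eq_iff)

lemma lift_SU_one: "(lift_SU (mat 1) :: complex^(('s::finite\<times>'m::finite)\<times>'u::finite)^(('s\<times>'m)\<times>'u)) = mat 1"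
  unfolding lift_SU_def mat_def by (auto simp: vec_eq_iff prod_eq_iff)

lemma lift_SU_mult: "(lift_SU A :: complex^(('s::finite\<times>'m::finite)\<times>'u::finite)^(('s\<times>'m)\<times>'u)) ** lift_SU B = lift_SU (A ** B)"
proof -
  have "(lift_SU A ** lift_SU B :: complex^(('s\<times>'m)\<times>'u)^(('s\<times>'m)\<times>'u)) $ i $ j = lift_SU (A ** B) $ i $ j" for i j
  proof -
    obtain si mi ui where i: "i = ((si,mi),ui)" by (metis prod.collapse)
    obtain sj mj uj where j: "j = ((sj,mj),uj)" by (metis prod.collapse)
    have "(lift_SU A ** lift_SU B :: complex^(('s\<times>'m)\<times>'u)^(('s\<times>'m)\<times>'u)) $ i $ j
       = (\<Sum>a\<in>UNIV. \<Sum>b\<in>UNIV. \<Sum>c\<in>UNIV. (if mi = b then A $ (si,ui) $ (a,c) else 0) * (if b = mj then B $ (a,c) $ (sj,uj) else 0))"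
      unfolding lift_SU_def matrix_matrix_mult_def i j sum_UNIV_prod
      by (simp cong: if_cong)
    also have "\<dots> = (\<Sum>a\<in>UNIV. if mi = mj then (\<Sum>c\<in>UNIV. A $ (si,ui) $ (a,c) * B $ (a,c) $ (sj,uj)) else 0)"
    proof (rule sum.cong[OF refl])
      fix a
      have "(\<Sum>b\<in>UNIV. \<Sum>c\<in>UNIV. (if mi = b then A $ (si,ui) $ (a,c) else 0) * (if b = mj then B $ (a,c) $ (sj,uj) else 0))
          = (\<Sum>b\<in>UNIV. if b = mi then (if mi = mj then (\<Sum>c\<in>UNIV. A $ (si,ui) $ (a,c) * B $ (a,c) $ (sj,uj)) else 0) else 0)"
        by (rule sum.cong[OF refl]) (cases "mi = mj"; auto)
      then show "(\<Sum>b\<in>UNIV. \<Sum>c\<in>UNIV. (if mi = b then A $ (si,ui) $ (a,c) else 0) * (if b = mj then B $ (a,c) $ (sj,uj) else 0))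
          = (if mi = mj then (\<Sum>c\<in>UNIV. A $ (si,ui) $ (a,c) * B $ (a,c) $ (sj,uj)) else 0)" by simp
    qed
    also have "\<dots> = lift_SU (A ** B) $ i $ j"
      unfolding lift_SU_def matrix_matrix_mult_def i j
      by (cases "mi = mj") (simp_all add: sum_UNIV_prod[where f="\<lambda>k. _ k"])
    finally show ?thesis .
  qed
  then show ?thesis by (simp add: vec_eq_iff)
qed

lemma lift_SU_unitary: "unitary_op V \<Longrightarrow> unitary_op (lift_SU V :: complex^(('s::finite\<times>'m::finite)\<times>'u::finite)^(('s\<times>'m)\<times>'u))"
  unfolding unitary_op_def cadj_lift_SU lift_SU_mult by (simp add: lift_SU_one)

lemma triple_delta: "(\<Sum>a\<in>(UNIV::'a::finite set). \<Sum>b\<in>(UNIV::'b::finite set). \<Sum>c\<in>(UNIV::'c::finite set).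
     if a = a0 \<and> b = b0 \<and> c = c0 then (f a b c :: complex) else 0) = f a0 b0 c0"
proof -
  have i1: "(\<Sum>c\<in>(UNIV::'c set). if a = a0 \<and> b = b0 \<and> c = c0 then f a b c else 0) = (if a = a0 \<and> b = b0 then f a b c0 else 0)" for a b
    by (cases "a = a0 \<and> b = b0") auto
  have i2: "(\<Sum>b\<in>(UNIV::'b set). if a = a0 \<and> b = b0 then f a b c0 else 0) = (if a = a0 then f a b0 c0 else 0)" for a
    by (cases "a = a0") auto
  show ?thesis unfolding i1 i2 by simp
qed

lemma lift_S_U_comm: "(lift_S H :: complex^(('s::finite\<times>'m::finite)\<times>'u::finite)^(('s\<times>'m)\<times>'u)) ** lift_U P = lift_U P ** lift_S H"
proof -
  have "(lift_S H ** lift_U P :: complex^(('s\<times>'m)\<times>'u)^(('s\<times>'m)\<times>'u)) $ i $ j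
      = (lift_U P ** lift_S H :: complex^(('s\<times>'m)\<times>'u)^(('s\<times>'m)\<times>'u)) $ i $ j" for i j
  proof -
    obtain si mi ui where i: "i = ((si,mi),ui)" by (metis prod.collapse)
    obtain sj mj uj where j: "j = ((sj,mj),uj)" by (metis prod.collapse)
    have "(lift_S H ** lift_U P :: complex^(('s\<times>'m)\<times>'u)^(('s\<times>'m)\<times>'u)) $ i $ j
        = (\<Sum>a\<in>UNIV. \<Sum>b\<in>UNIV. \<Sum>c\<in>UNIV. (if mi = b \<and> ui = c then H $ si $ a else 0) * (if a = sj \<and> b = mj then P $ c $ uj else 0))"
      unfolding lift_S_def lift_U_def matrix_matrix_mult_def i j sum_UNIV_prod
      by (simp cong: if_cong)
    also have "\<dots> = (\<Sum>a\<in>UNIV. \<Sum>b\<in>UNIV. \<Sum>c\<in>UNIV. if a = sj \<and> b = mi \<and> c = ui then (if mi = mj then H $ si $ sj * P $ ui $ uj else 0) else 0)"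
      by (intro sum.cong refl) auto
    also have "\<dots> = (if mi = mj then H $ si $ sj * P $ ui $ uj else 0)" by (rule triple_delta)
    also have "\<dots> = (\<Sum>a\<in>UNIV. \<Sum>b\<in>UNIV. \<Sum>c\<in>UNIV. if a = si \<and> b = mi \<and> c = uj then (if mi = mj then H $ si $ sj * P $ ui $ uj else 0) else 0)"
      by (rule triple_delta[symmetric])
    also have "\<dots> = (\<Sum>a\<in>UNIV. \<Sum>b\<in>UNIV. \<Sum>c\<in>UNIV. (if si = a \<and> mi = b then P $ ui $ c else 0) * (if b = mj \<and> c = uj then H $ a $ sj else 0))"
      by (intro sum.cong refl) auto
    also have "\<dots> = (lift_U P ** lift_S H :: complex^(('s\<times>'m)\<times>'u)^(('s\<times>'m)\<times>'u)) $ i $ j"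
      unfolding lift_S_def lift_U_def matrix_matrix_mult_def i j sum_UNIV_prod
      by (simp cong: if_cong)
    finally show ?thesis .
  qed
  then show ?thesis by (simp add: vec_eq_iff)
qed

lemma cadj_tensor: "cadj (tensor_op A B) = tensor_op (cadj A) (cadj B)"
  unfolding cadj_def tensor_op_def by (simp add: vec_eq_iff)

lemma tensor_mult: "tensor_op (A::complex^'a::finite^'a) (C::complex^'b::finite^'b) ** tensor_op B D = tensor_op (A ** B) (C ** D)"
proof -
  have "(tensor_op A C ** tensor_op B D) $ i $ j = tensor_op (A ** B) (C ** D) $ i $ j" for i j
    unfolding tensor_op_def matrix_matrix_mult_def
    by (simp add: sum_UNIV_prod sum_product mult_ac)
  then show ?thesis by (simp add: vec_eq_iff)
qed

lemma tensor_diag: "tensor_op (diag_op a :: complex^'a::finite^'a) (diag_op b :: complex^'b::finite^'b) = diag_op (\<lambda>p. a (fst p) * b (snd p))"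
  unfolding tensor_op_def diag_op_def by (auto simp: vec_eq_iff prod_eq_iff)

lemma trace_tensor: "trace (tensor_op (A::complex^'a::finite^'a) (B::complex^'b::finite^'b)) = trace A * trace B"
  unfolding trace_def tensor_op_def by (simp add: sum_UNIV_prod sum_product)

lemma diag_mv: "(diag_op l *v y) $ c = complex_of_real (l c) * y $ c"
proof -
  have "(diag_op l *v y) $ c = (\<Sum>k\<in>UNIV. (if c = k then complex_of_real (l c) else 0) * y $ k)"
    unfolding diag_op_def matrix_vector_mult_def by simp
  also have "\<dots> = (\<Sum>k\<in>UNIV. if k = c then complex_of_real (l c) * y $ k else 0)"
    by (rule sum.cong) auto
  finally show ?thesis by simp
qed

lemma cnj_mid: "cnj z * (a * z) = a * complex_of_real ((cmod z)^2)"
  by (metis cnj_sq2 mult.left_commute)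

lemma psd_of_decomp:
  fixes T :: "complex^'n^'n"
  assumes l0: "\<And>c. l c \<ge> 0"
  shows "positive_op (T ** diag_op l ** cadj T)"
proof -
  have q: "cinner x ((T ** diag_op l ** cadj T) *v x) = complex_of_real (\<Sum>c\<in>UNIV. l c * (cmod ((cadj T *v x) $ c))^2)" for x
  proof -
    define y where "y = cadj T *v x"
    have "cinner x ((T ** diag_op l ** cadj T) *v x) = cinner x (T *v (diag_op l *v y))"
      unfolding y_def by (simp add: matrix_vector_mul_assoc matrix_mul_assoc)
    also have "\<dots> = cinner y (diag_op l *v y)" unfolding cinner_adj y_def ..
    also have "\<dots> = complex_of_real (\<Sum>c\<in>UNIV. l c * (cmod (y $ c))^2)"
      unfolding cinner_def diag_mv of_real_sum
      by (rule sum.cong) (simp_all only: cnj_mid of_real_mult)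
    finally show ?thesis unfolding y_def .
  qed
  show ?thesis unfolding positive_op_def cinner_def[symmetric] q
    using l0 by (simp add: sum_nonneg)
qed

theorem mainTheorem5:
  fixes H_S :: "complex^'s::finite^'s"
    and rho_SM :: "complex^('s \<times> 'm::finite)^('s \<times> 'm)"
    and rho_U :: "complex^'u::finite^'u"
    and V :: "complex^('s \<times> 'u)^('s \<times> 'u)"
    and P :: "'r::finite \<Rightarrow> complex^'u^'u"
    and \<beta> :: real
  assumes "hermitian H_S"
    and "density_op rho_SM"
    and "density_op rho_U"
    and "unitary_op V"
    and "\<And>r. positive_op (P r)"
    and "(\<Sum>r\<in>UNIV. P r ** P r) = mat 1"
    and "\<beta> > 0"
  shows
    "let rho_minus = tensor_op rho_SM rho_U;
         W = (lift_SU V :: complex^(('s \<times> 'm) \<times> 'u)^(('s \<times> 'm) \<times> 'u));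
         sigma = W ** rho_minus ** cadj W;
         Pf = (\<lambda>r. (lift_U (P r) :: complex^(('s \<times> 'm) \<times> 'u)^(('s \<times> 'm) \<times> 'u)));
         p = (\<lambda>r. Re (trace (Pf r ** sigma ** Pf r)));
         rho_plus = (\<lambda>r. (1 / p r) *\<^sub>R (Pf r ** sigma ** Pf r));
         Q = (\<lambda>r. Re (trace ((lift_S H_S :: complex^(('s \<times> 'm) \<times> 'u)^(('s \<times> 'm) \<times> 'u))
                             ** (rho_plus r - sigma))));
         Sigma = (\<lambda>r. - ln (p r) + vN_entropy (rho_plus r) - vN_entropy rho_minus - \<beta> * Q r)
     in (\<Sum>r | p r > 0. p r * Sigma r) \<ge> 0"
proof -
  note a = assms
  have pSM: "positive_op rho_SM" and tSM: "trace rho_SM = 1" using a(2) unfolding density_op_def by auto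
  have pU: "positive_op rho_U" and tU: "trace rho_U = 1" using a(3) unfolding density_op_def by auto
  obtain U1 l1 where U1: "unitary_op U1" "rho_SM = U1 ** diag_op l1 ** cadj U1"
    using spectral[OF positive_hermitian[OF pSM]] by blast
  obtain U2 l2 where U2: "unitary_op U2" "rho_U = U2 ** diag_op l2 ** cadj U2"
    using spectral[OF positive_hermitian[OF pU]] by blast
  have l1: "l1 c \<ge> 0" for c by (rule eig_nonneg[OF pSM U1])
  have l2: "l2 c \<ge> 0" for c by (rule eig_nonneg[OF pU U2])
  have rdec: "tensor_op rho_SM rho_U = tensor_op U1 U2 ** diag_op (\<lambda>p. l1 (fst p) * l2 (snd p)) ** cadj (tensor_op U1 U2)"
    unfolding tensor_diag[symmetric] cadj_tensor tensor_mult U1(2) U2(2) ..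
  have prho: "positive_op (tensor_op rho_SM rho_U)"
    unfolding rdec by (rule psd_of_decomp) (simp add: l1 l2)
  have hrho: "cadj (tensor_op rho_SM rho_U) = tensor_op rho_SM rho_U"
    unfolding cadj_tensor positive_hermitian[OF pSM] positive_hermitian[OF pU] ..
  have trho: "trace (tensor_op rho_SM rho_U) = 1" unfolding trace_tensor tSM tU by simp
  have uW: "unitary_op (lift_SU V :: complex^(('s \<times> 'm) \<times> 'u)^(('s \<times> 'm) \<times> 'u))"
    by (rule lift_SU_unitary[OF a(4)])
  have hP: "cadj (lift_U (P r) :: complex^(('s \<times> 'm) \<times> 'u)^(('s \<times> 'm) \<times> 'u)) = lift_U (P r)" for r
    unfolding cadj_lift_U positive_hermitian[OF a(5)] ..
  have sumP: "(\<Sum>r\<in>UNIV. (lift_U (P r) :: complex^(('s \<times> 'm) \<times> 'u)^(('s \<times> 'm) \<times> 'u)) ** lift_U (P r)) = mat 1"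
    unfolding lift_U_mult lift_U_sum[symmetric] a(6) lift_U_one ..
  have comm: "(lift_S H_S :: complex^(('s \<times> 'm) \<times> 'u)^(('s \<times> 'm) \<times> 'u)) ** lift_U (P r) = lift_U (P r) ** lift_S H_S" for r
    by (rule lift_S_U_comm)
  show ?thesis
    using core[OF hrho prho trho uW, of "\<lambda>r. lift_U (P r)" "lift_S H_S" \<beta>, OF hP sumP comm]
    unfolding Let_def .
qed

end
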